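(* Let $S^+=\{\overline{\jmath}_1,\dots,\overline{\jmath}_\nu\}$ be distinct positive integers, $S=S^+\cup(-S^+)$, $S^c=\mathbb{Z}\setminus(S\cup\{0\})$, and $\xi\in[1,2]^\nu$ (indexed by $S^+$, $\xi_{\overline{\jmath}_i}=\xi_i$). Define for $j\in S^c$ $$\mathfrak l_j:=\frac23\sum_{j_2\in S^+}\frac{(1+j_2^2)(1+j^2)(2+j_2^2+j^2)}{(3+j_2^2-j_2j+j^2)(3+j_2^2+j_2j+j^2)}\xi_{j_2},\qquad c:=\frac23\sum_{j\in S^+}(1+j^2)\xi_j,$$ and $\kappa_j:=\lambda(j)(\mathfrak l_j-c)$, where $\lambda(j)=j\frac{4+j^2}{1+j^2}$. Then there is a constant $C>0$ depending on the set $S$ such that $|j|\,|\kappa_j|\le C$ for all $j\in S^c$. *)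

theory Defs
  imports Complex_Main
begin

definition lam :: "int \<Rightarrow> real" where
  "lam j = real_of_int j * (4 + (real_of_int j)^2) / (1 + (real_of_int j)^2)"

definition frak_l :: "int set \<Rightarrow> (int \<Rightarrow> real) \<Rightarrow> int \<Rightarrow> real" where
  "frak_l Sp \<xi> j = 2/3 * (\<Sum>j2\<in>Sp.
     (1 + (real_of_int j2)^2) * (1 + (real_of_int j)^2) * (2 + (real_of_int j2)^2 + (real_of_int j)^2)
     / ((3 + (real_of_int j2)^2 - real_of_int j2 * real_of_int j + (real_of_int j)^2)
        * (3 + (real_of_int j2)^2 + real_of_int j2 * real_of_int j + (real_of_int j)^2))
     * \<xi> j2)"

definition c_const :: "int set \<Rightarrow> (int \<Rightarrow> real) \<Rightarrow> real" where
  "c_const Sp \<xi> = 2/3 * (\<Sum>j\<in>Sp. (1 + (real_of_int j)^2) * \<xi> j)"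

definition kappa :: "int set \<Rightarrow> (int \<Rightarrow> real) \<Rightarrow> int \<Rightarrow> real" where
  "kappa Sp \<xi> j = lam j * (frak_l Sp \<xi> j - c_const Sp \<xi>)"

definition Sfull :: "int set \<Rightarrow> int set" where
  "Sfull Sp = Sp \<union> uminus ` Sp"

definition Scompl :: "int set \<Rightarrow> int set" where
  "Scompl Sp = UNIV - (Sfull Sp \<union> {0})"

end

theory Submission
  imports Defs
begin

lemma term_bound:
  fixes a y xi :: real
  assumes xi: "1 \<le> xi" "xi \<le> 2"
  shows "\<bar>y * (y * (4 + y^2) / (1 + y^2)) *
     ((1 + a^2) * (1 + y^2) * (2 + a^2 + y^2) / ((3 + a^2 - a * y + y^2) * (3 + a^2 + a * y + y^2)) * xi
      - (1 + a^2) * xi)\<bar> \<le> 11 * (1 + a^2) * (a^2 + 3)"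
proof -
  define s where "s = a^2 + y^2"
  define D where "D = (3 + a^2 - a * y + y^2) * (3 + a^2 + a * y + y^2)"
  define E where "E = a^4 + 5*a^2 + 3*y^2 + 7"
  have Deq: "D = (3 + s)^2 - a^2 * y^2" unfolding D_def s_def by (simp add: algebra_simps power2_eq_square)
  have ay: "a^2 * y^2 \<le> s^2 / 4" unfolding s_def
    using sum_squares_ge_zero[of "a^2 - y^2" 0]
    by (simp add: algebra_simps power2_eq_square)
  have s0: "s \<ge> 0" unfolding s_def by simp
  have Dlow: "D \<ge> 3/4 * (3 + s)^2" using Deq ay s0 by (simp add: power2_eq_square algebra_simps)
  have "(3 + s)^2 > 0" using s0 by simp
  hence Dpos: "D > 0" using Dlow by linarith
  have y1: "1 + y^2 > 0" by (simp add: add_pos_nonneg)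
  have a1: "1 + a^2 > 0" by (simp add: add_pos_nonneg)
  have N: "(1 + a^2) * (1 + y^2) * (2 + a^2 + y^2) / D * xi - (1 + a^2) * xi
      = - ((1 + a^2) * xi * E / D)"
  proof -
    have "(1 + y^2) * (2 + a^2 + y^2) = D - E"
      unfolding E_def D_def by (simp add: algebra_simps power2_eq_square power4_eq_xxxx)
    hence h2: "(1 + a^2) * (1 + y^2) * (2 + a^2 + y^2) = (1 + a^2) * (D - E)"
      by (metis mult.assoc)
    show ?thesis unfolding h2 using Dpos by (simp add: field_simps)
  qed
  have E0: "E \<ge> 0" unfolding E_def by (simp add: add_nonneg_nonneg)
  have lhs: "\<bar>y * (y * (4 + y^2) / (1 + y^2)) * (- ((1 + a^2) * xi * E / D))\<bar>
     = ((4 + y^2) / (1 + y^2)) * (1 + a^2) * xi * (y^2 * E / D)"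
    using Dpos E0 y1 a1 xi by (simp add: abs_mult power2_eq_square)
  have f1: "(4 + y^2) / (1 + y^2) \<le> 4" using y1 by (simp add: field_simps)
  have f1p: "(4 + y^2) / (1 + y^2) \<ge> 0" using y1 by simp
  have key1: "y^2 * E \<le> y^2 * ((a^2 + 3) * (3 + s))"
    apply (rule mult_left_mono) unfolding E_def s_def
    using mult_nonneg_nonneg[of "a*a" "y*y"]
    by (simp_all add: algebra_simps power2_eq_square power4_eq_xxxx)
  have key2: "y^2 * ((a^2 + 3) * (3 + s)) \<le> (3 + s) * ((a^2 + 3) * (3 + s))"
    apply (rule mult_right_mono) unfolding s_def by (simp_all add: add_nonneg_nonneg)
  have key3: "(3 + s) * ((a^2 + 3) * (3 + s)) \<le> 4/3 * (a^2 + 3) * D"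
  proof -
    have "3/4 * (3 + s)^2 * (a^2 + 3) \<le> D * (a^2 + 3)"
      by (rule mult_right_mono[OF Dlow]) simp
    hence A: "4/3 * (3/4 * (3 + s)^2 * (a^2 + 3)) \<le> 4/3 * (D * (a^2 + 3))"
      by (rule mult_left_mono) simp_all
    have e1: "4/3 * (3/4 * (3 + s)^2 * (a^2 + 3)) = (3 + s) * ((a^2 + 3) * (3 + s))"
      by (simp add: power2_eq_square)
    have e2: "4/3 * (D * (a^2 + 3)) = 4/3 * (a^2 + 3) * D" by simp
    show ?thesis using A unfolding e1 e2 .
  qed
  have q: "y^2 * E / D \<le> 4/3 * (a^2 + 3)"
    using key1 key2 key3 Dpos by (simp add: divide_le_eq)
  have qp: "y^2 * E / D \<ge> 0" using Dpos E0 by simp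
  have "((4 + y^2) / (1 + y^2)) * (1 + a^2) * xi * (y^2 * E / D)
     \<le> 4 * (1 + a^2) * 2 * (4/3 * (a^2 + 3))"
    apply (intro mult_mono) using f1 f1p xi qp q a1 by simp_all
  also have "\<dots> \<le> 11 * (1 + a^2) * (a^2 + 3)"
  proof -
    have P: "0 \<le> (1 + a^2) * (a^2 + 3)" by simp
    have "4 * (1 + a^2) * 2 * (4/3 * (a^2 + 3)) = 32/3 * ((1 + a^2) * (a^2 + 3))" by (simp add: algebra_simps)
    moreover have "11 * (1 + a^2) * (a^2 + 3) = 11 * ((1 + a^2) * (a^2 + 3))" by simp
    ultimately show ?thesis using P by linarith
  qed
  finally show ?thesis using lhs N unfolding D_def by simp
qed

theorem lemma7p3:
  fixes Sp :: "int set"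
  assumes "finite Sp" and "\<forall>j\<in>Sp. j > 0"
  shows "\<exists>C>0. \<forall>\<xi> :: int \<Rightarrow> real. (\<forall>j\<in>Sp. 1 \<le> \<xi> j \<and> \<xi> j \<le> 2) \<longrightarrow>
           (\<forall>j\<in>Scompl Sp. \<bar>real_of_int j\<bar> * \<bar>kappa Sp \<xi> j\<bar> \<le> C)"
proof -
  define K where "K a = 11 * (1 + (real_of_int a)^2) * ((real_of_int a)^2 + 3)" for a
  define C where "C = 1 + (\<Sum>a\<in>Sp. K a)"
  have K0: "K a \<ge> 0" for a unfolding K_def by (simp add: add_nonneg_nonneg)
  have Cpos: "C > 0" unfolding C_def using K0 by (simp add: sum_nonneg add_pos_nonneg)
  show ?thesis
  proof (intro exI[of _ C] conjI Cpos allI impI ballI)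
    fix \<xi> :: "int \<Rightarrow> real" and j :: int
    assume xi: "\<forall>j\<in>Sp. 1 \<le> \<xi> j \<and> \<xi> j \<le> 2"
    define t where "t a = real_of_int j * lam j *
       ((1 + (real_of_int a)^2) * (1 + (real_of_int j)^2) * (2 + (real_of_int a)^2 + (real_of_int j)^2)
     / ((3 + (real_of_int a)^2 - real_of_int a * real_of_int j + (real_of_int j)^2)
        * (3 + (real_of_int a)^2 + real_of_int a * real_of_int j + (real_of_int j)^2))
     * \<xi> a - (1 + (real_of_int a)^2) * \<xi> a)" for a
    have eq: "real_of_int j * kappa Sp \<xi> j = 2/3 * (\<Sum>a\<in>Sp. t a)"
      unfolding kappa_def frak_l_def c_const_def t_def
      by (simp add: sum_subtractf[symmetric] sum_distrib_left right_diff_distrib algebra_simps)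
    have tb: "\<bar>t a\<bar> \<le> K a" if "a \<in> Sp" for a
      using term_bound[where xi="\<xi> a" and a="real_of_int a" and y="real_of_int j"] xi that
      unfolding t_def K_def lam_def by simp
    have "\<bar>real_of_int j\<bar> * \<bar>kappa Sp \<xi> j\<bar> = 2/3 * \<bar>\<Sum>a\<in>Sp. t a\<bar>"
      using eq by (metis abs_mult abs_of_pos zero_less_divide_iff zero_less_numeral)
    also have "\<dots> \<le> 2/3 * (\<Sum>a\<in>Sp. \<bar>t a\<bar>)" by (simp add: sum_abs)
    also have "\<dots> \<le> 2/3 * (\<Sum>a\<in>Sp. K a)" using tb by (simp add: sum_mono)
    also have "\<dots> \<le> C" unfolding C_def using K0 by (simp add: sum_nonneg)
    finally show "\<bar>real_of_int j\<bar> * \<bar>kappa Sp \<xi> j\<bar> \<le> C" .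
  qed
qed

end
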